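(* Let $X$ be a locally compact Hausdorff space. Then $(\Gamma(X),\tau_{hco})$ is a regular space.
   Context: $\Gamma(X)$ denotes the set of all homeomorphisms $f:\mathrm{dom}(f)\to\mathrm{im}(f)$ between open subsets of $X$ (including the empty function), an inverse semigroup under partial composition. For compact $K\subseteq X$ and open $V\subseteq X$ put $\langle K,V\rangle=\{f\in\Gamma(X): K\subseteq\mathrm{dom}(f),\ f(K)\subseteq V\}$ and $\langle K,V\rangle^{-1}=\{f\in\Gamma(X): K\subseteq\mathrm{im}(f),\ f^{-1}(K)\subseteq V\}$. $CL(X)$ is the set of closed subsets of $X$ (including $\emptyset$) with the Fell topology, generated by the subbasic sets $(X\setminus K)^+=\{A\in CL(X): A\subseteq X\setminus K\}$ ($K$ compact) and $V^-=\{A\in CL(X): A\cap V\neq\emptyset\}$ ($V$ nonempty open). Define $D,I:\Gamma(X)\to CL(X)$ by $D(f)=X\setminus\mathrm{dom}(f)$, $I(f)=X\setminus\mathrm{im}(f)$. The topology $\tau_{hco}$ on $\Gamma(X)$ is generated by all sets $\langle K,V\rangle$, $\langle K,V\rangle^{-1}$, $D^{-1}(W)$ and $I^{-1}(W)$, where $K$ is compact, $V$ open in $X$ and $W$ is Fell-open in $CL(X)$. *)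

theory Defs
  imports "HOL-Analysis.Analysis"
begin

definition Gamma :: "'a topology \<Rightarrow> ('a \<Rightarrow> 'a option) set" where
  "Gamma X = {f. dom f \<subseteq> topspace X \<and> openin X (dom f) \<and> openin X (ran f) \<and>
      homeomorphic_map (subtopology X (dom f)) (subtopology X (ran f)) (\<lambda>x. the (f x))}"

definition pimg :: "('a \<Rightarrow> 'a option) \<Rightarrow> 'a set \<Rightarrow> 'a set" where
  "pimg f K = (\<lambda>x. the (f x)) ` K"

definition ppre :: "('a \<Rightarrow> 'a option) \<Rightarrow> 'a set \<Rightarrow> 'a set" where
  "ppre f K = {x \<in> dom f. the (f x) \<in> K}"

definition CLs :: "'a topology \<Rightarrow> 'a set set" where
  "CLs X = {A. closedin X A}"

definition fell_topology :: "'a topology \<Rightarrow> 'a set topology" where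
  "fell_topology X = topology_generated_by
     ({{A \<in> CLs X. A \<subseteq> topspace X - K} | K. compactin X K} \<union>
      {{A \<in> CLs X. A \<inter> V \<noteq> {}} | V. openin X V \<and> V \<noteq> {}})"

definition Dom_c :: "'a topology \<Rightarrow> ('a \<Rightarrow> 'a option) \<Rightarrow> 'a set" where
  "Dom_c X f = topspace X - dom f"

definition Im_c :: "'a topology \<Rightarrow> ('a \<Rightarrow> 'a option) \<Rightarrow> 'a set" where
  "Im_c X f = topspace X - ran f"

definition hco_subbasis :: "'a topology \<Rightarrow> ('a \<Rightarrow> 'a option) set set" where
  "hco_subbasis X =
     {{f \<in> Gamma X. K \<subseteq> dom f \<and> pimg f K \<subseteq> V} | K V. compactin X K \<and> openin X V} \<union>
     {{f \<in> Gamma X. K \<subseteq> ran f \<and> ppre f K \<subseteq> V} | K V. compactin X K \<and> openin X V} \<union>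
     {{f \<in> Gamma X. Dom_c X f \<in> W} | W. openin (fell_topology X) W} \<union>
     {{f \<in> Gamma X. Im_c X f \<in> W} | W. openin (fell_topology X) W}"

definition hco_topology :: "'a topology \<Rightarrow> ('a \<Rightarrow> 'a option) topology" where
  "hco_topology X = topology_generated_by (hco_subbasis X)"

end

theory Submission
  imports Defs
begin

lemma lc_nbhd:
  assumes lc: "locally_compact_space X" and H: "Hausdorff_space X"
    and K: "compactin X K" and V: "openin X V" and KV: "K \<subseteq> V"
  shows "\<exists>W. openin X W \<and> K \<subseteq> W \<and> compactin X (X closure_of W) \<and> X closure_of W \<subseteq> V"
proof -
  have lcV: "locally_compact_space (subtopology X V)"
    using locally_compact_space_open_subset H lc V by blast
  have HV: "Hausdorff_space (subtopology X V)"
    using H Hausdorff_space_subtopology by blast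
  have KV': "compactin (subtopology X V) K"
    using K KV compactin_subtopology by blast
  obtain U L where UL: "openin (subtopology X V) U" "compactin (subtopology X V) L"
     "K \<subseteq> U" "U \<subseteq> L"
    using locally_compact_space_compact_closed_compact[of "subtopology X V"] HV lcV KV' by blast
  have U: "openin X U" using UL(1) V openin_open_subtopology by blast
  have L: "compactin X L" "L \<subseteq> V" using UL(2) by (simp_all add: compactin_subtopology)
  have Lc: "closedin X L" using L H compactin_imp_closedin by blast
  have cl: "X closure_of U \<subseteq> L" using closure_of_minimal UL(4) Lc by blast
  show ?thesis
    apply (rule exI[of _ U])
    using U UL(3) cl L closed_compactin[OF L(1) cl] by auto
qed

lemma hco_open_basis: "s \<in> hco_subbasis X \<Longrightarrow> openin (hco_topology X) s"
  by (simp add: hco_topology_def topology_generated_by_Basis)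

lemma hco_topspace_sub: "topspace (hco_topology X) \<subseteq> Gamma X"
  unfolding hco_topology_def topology_generated_by_topspace
  by (auto simp: hco_subbasis_def)

lemma fell_open1: "compactin X K \<Longrightarrow>
   openin (fell_topology X) {A \<in> CLs X. A \<subseteq> topspace X - K}"
  unfolding fell_topology_def by (rule topology_generated_by_Basis) blast

lemma fell_open2: "openin X V \<Longrightarrow> V \<noteq> {} \<Longrightarrow>
   openin (fell_topology X) {A \<in> CLs X. A \<inter> V \<noteq> {}}"
  unfolding fell_topology_def by (rule topology_generated_by_Basis) blast

definition finv :: "('a \<Rightarrow> 'a option) \<Rightarrow> 'a \<Rightarrow> 'a" where
  "finv f = inv_into (dom f) (\<lambda>x. the (f x))"

lemma Gamma_dom:
  assumes "f \<in> Gamma X"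
  shows "openin X (dom f)" "continuous_map (subtopology X (dom f)) X (\<lambda>x. the (f x))"
proof -
  show "openin X (dom f)" using assms by (simp add: Gamma_def)
  have "continuous_map (subtopology X (dom f)) (subtopology X (ran f)) (\<lambda>x. the (f x))"
    using assms homeomorphic_imp_continuous_map by (auto simp: Gamma_def)
  then show "continuous_map (subtopology X (dom f)) X (\<lambda>x. the (f x))"
    using continuous_map_from_subtopology continuous_map_into_fulltopology by blast
qed

lemma ran_image: "(\<lambda>x. the (f x)) ` dom f = ran f"
  by (force simp: ran_def dom_def)

lemma Gamma_ran:
  assumes "f \<in> Gamma X"
  shows "openin X (ran f)" "continuous_map (subtopology X (ran f)) X (finv f)"
    "K \<subseteq> ran f \<Longrightarrow> ppre f K = finv f ` K"
proof -
  have G: "dom f \<subseteq> topspace X" "openin X (dom f)" "openin X (ran f)"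
    "homeomorphic_map (subtopology X (dom f)) (subtopology X (ran f)) (\<lambda>x. the (f x))"
    using assms unfolding Gamma_def by blast+
  show "openin X (ran f)" using G(3) .
  note hm = G(4)
  have ds: "ran f \<subseteq> topspace X" using G(3) openin_subset by blast
  have td: "topspace (subtopology X (dom f)) = dom f" using G(1) by (simp add: Int_absorb1)
  have tr: "topspace (subtopology X (ran f)) = ran f" using ds by (simp add: Int_absorb1)
  have inj: "inj_on (\<lambda>x. the (f x)) (dom f)"
    using homeomorphic_imp_injective_map[OF hm] td by simp
  obtain g where g: "homeomorphic_maps (subtopology X (dom f)) (subtopology X (ran f)) (\<lambda>x. the (f x)) g"
    using hm homeomorphic_map_maps by blast
  have gc: "continuous_map (subtopology X (ran f)) (subtopology X (dom f)) g"
    using g unfolding homeomorphic_maps_def by blast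
  have gi: "\<And>y. y \<in> ran f \<Longrightarrow> the (f (g y)) = y"
    using g unfolding homeomorphic_maps_def tr by blast
  have gd: "\<And>y. y \<in> ran f \<Longrightarrow> g y \<in> dom f"
  proof -
    fix y assume "y \<in> ran f"
    then have "g y \<in> topspace (subtopology X (dom f))"
      using continuous_map_image_subset_topspace[OF gc] tr by blast
    then show "g y \<in> dom f" using td by simp
  qed
  have eq: "\<And>y. y \<in> ran f \<Longrightarrow> g y = finv f y"
  proof -
    fix y assume y: "y \<in> ran f"
    have "finv f (the (f (g y))) = g y"
      unfolding finv_def using inv_into_f_f[OF inj gd[OF y]] .
    then show "g y = finv f y" using gi[OF y] by simp
  qed
  have "continuous_map (subtopology X (ran f)) (subtopology X (dom f)) (finv f)"
    using continuous_map_eq[OF gc, of "finv f"] eq tr by simp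
  then show "continuous_map (subtopology X (ran f)) X (finv f)"
    using continuous_map_into_fulltopology by blast
  assume K: "K \<subseteq> ran f"
  show "ppre f K = finv f ` K"
  proof
    show "ppre f K \<subseteq> finv f ` K"
    proof
      fix x assume "x \<in> ppre f K"
      then have x: "x \<in> dom f" "the (f x) \<in> K" by (auto simp: ppre_def)
      then have "finv f (the (f x)) = x" unfolding finv_def using inv_into_f_f[OF inj x(1)] by simp
      then show "x \<in> finv f ` K" using rev_image_eqI[OF x(2), of x "finv f"] by simp
    qed
    show "finv f ` K \<subseteq> ppre f K"
    proof (rule image_subsetI)
      fix y assume y: "y \<in> K"
      have yr: "y \<in> (\<lambda>x. the (f x)) ` dom f" unfolding ran_image using K y by blast
      have "finv f y \<in> dom f" unfolding finv_def using inv_into_into[OF yr] .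
      moreover have "the (f (finv f y)) = y" unfolding finv_def using f_inv_into_f[OF yr] .
      ultimately show "finv f y \<in> ppre f K" using y unfolding ppre_def by simp
    qed
  qed
qed

lemma closure_sub_crit:
  assumes "topspace T \<subseteq> G"
    and "\<And>g. g \<in> G \<Longrightarrow> g \<notin> S \<Longrightarrow> \<exists>M. openin T M \<and> g \<in> M \<and> M \<inter> N = {}"
  shows "T closure_of N \<subseteq> S"
proof
  fix g assume g: "g \<in> T closure_of N"
  show "g \<in> S"
  proof (rule ccontr)
    assume gS: "g \<notin> S"
    have "g \<in> topspace T" using g closure_of_subset_topspace[of T N] by (rule subsetD[rotated])
    then have gG: "g \<in> G" using assms(1) by (rule subsetD[rotated])
    obtain M where M: "openin T M" "g \<in> M" "M \<inter> N = {}" using assms(2)[OF gG gS] by (elim exE conjE)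
    have "\<exists>y. y \<in> N \<and> y \<in> M" using g M(1,2) unfolding in_closure_of by blast
    then show False using M(3) by blast
  qed
qed

lemma generic1:
  fixes X :: "'a topology" and T :: "'b topology"
  assumes lc: "locally_compact_space X" and H: "Hausdorff_space X"
   and H1: "\<And>h. h \<in> G \<Longrightarrow> openin X (dm h) \<and> continuous_map (subtopology X (dm h)) X (ap h)"
   and H2: "\<And>K V. compactin X K \<Longrightarrow> openin X V \<Longrightarrow> openin T {h\<in>G. K \<subseteq> dm h \<and> ap h ` K \<subseteq> V}"
   and H3: "\<And>U. openin X U \<Longrightarrow> openin T {h\<in>G. \<not> U \<subseteq> dm h}"
   and TG: "topspace T \<subseteq> G"
   and K: "compactin X K" and V: "openin X V" and f: "f \<in> G" "K \<subseteq> dm f" "ap f ` K \<subseteq> V"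
  shows "\<exists>N. openin T N \<and> f \<in> N \<and> T closure_of N \<subseteq> {h\<in>G. K \<subseteq> dm h \<and> ap h ` K \<subseteq> V}"
proof -
  have Kt: "K \<subseteq> topspace X" using K compactin_subset_topspace by blast
  have cf: "continuous_map (subtopology X (dm f)) X (ap f)" and of: "openin X (dm f)"
    using H1 f(1) by auto
  have "compactin X (ap f ` K)"
    using image_compactin[OF _ cf] K f(2) compactin_subtopology by blast
  then obtain W where W: "openin X W" "ap f ` K \<subseteq> W" "compactin X (X closure_of W)"
     "X closure_of W \<subseteq> V"
    using lc_nbhd[OF lc H _ V f(3)] by blast
  define P where "P = {x \<in> topspace (subtopology X (dm f)). ap f x \<in> W}"
  have "openin (subtopology X (dm f)) P"
    unfolding P_def using openin_continuous_map_preimage[OF cf W(1)] .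
  then have P: "openin X P" using of openin_open_subtopology by blast
  have KP: "K \<subseteq> P" unfolding P_def using Kt f(2) W(2) by auto
  obtain U where U: "openin X U" "K \<subseteq> U" "compactin X (X closure_of U)" "X closure_of U \<subseteq> P"
    using lc_nbhd[OF lc H K P KP] by blast
  have Ut: "U \<subseteq> topspace X" using U(1) openin_subset by blast
  have UcU: "U \<subseteq> X closure_of U" using closure_of_subset Ut by blast
  have Wt: "W \<subseteq> topspace X" using W(1) openin_subset by blast
  have WcW: "W \<subseteq> X closure_of W" using closure_of_subset Wt by blast
  define N where "N = {h\<in>G. X closure_of U \<subseteq> dm h \<and> ap h ` (X closure_of U) \<subseteq> W}"
  have oN: "openin T N" unfolding N_def using H2 U(3) W(1) by blast
  have fN: "f \<in> N" unfolding N_def using f(1) U(4) by (auto simp: P_def)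
  have "T closure_of N \<subseteq> {h\<in>G. K \<subseteq> dm h \<and> ap h ` K \<subseteq> V}"
  proof (rule closure_sub_crit[OF TG])
    fix g assume g: "g \<in> G" "g \<notin> {h\<in>G. K \<subseteq> dm h \<and> ap h ` K \<subseteq> V}"
    show "\<exists>M. openin T M \<and> g \<in> M \<and> M \<inter> N = {}"
    proof (cases "K \<subseteq> dm g")
      case False
      define M where "M = {h\<in>G. \<not> U \<subseteq> dm h}"
      have "openin T M" unfolding M_def using H3 U(1) by blast
      moreover have "g \<in> M" unfolding M_def using False g(1) U(2) by blast
      moreover have "M \<inter> N = {}" unfolding M_def N_def using UcU by blast
      ultimately show ?thesis by blast
    next
      case True
      then obtain x where x: "x \<in> K" "ap g x \<notin> V" using g by blast
      have xt: "x \<in> topspace X" using x Kt by blast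
      have cg: "continuous_map (subtopology X (dm g)) X (ap g)" using H1 g(1) by blast
      have "ap g x \<in> topspace X"
        using cg x True xt by (auto simp: continuous_map_def)
      then have gx: "ap g x \<in> topspace X - X closure_of W" using x W(4) by blast
      define M where "M = {h\<in>G. {x} \<subseteq> dm h \<and> ap h ` {x} \<subseteq> topspace X - X closure_of W}"
      have "openin T M" unfolding M_def
        by (rule H2) (use xt in auto)
      moreover have "g \<in> M" unfolding M_def using g(1) gx x True by auto
      moreover have "M \<inter> N = {}"
      proof -
        have "x \<in> X closure_of U" using x U(2) UcU by blast
        then show ?thesis unfolding M_def N_def using WcW by blast
      qed
      ultimately show ?thesis by blast
    qed
  qed
  then show ?thesis using oN fN by blast
qed

lemma generic2:
  fixes X :: "'a topology" and T :: "'b topology"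
  assumes lc: "locally_compact_space X" and H: "Hausdorff_space X"
   and H1: "\<And>h. h \<in> G \<Longrightarrow> openin X (dm h) \<and> continuous_map (subtopology X (dm h)) X (ap h)"
   and H2: "\<And>K V. compactin X K \<Longrightarrow> openin X V \<Longrightarrow> openin T {h\<in>G. K \<subseteq> dm h \<and> ap h ` K \<subseteq> V}"
   and H3: "\<And>U. openin X U \<Longrightarrow> openin T {h\<in>G. \<not> U \<subseteq> dm h}"
   and TG: "topspace T \<subseteq> G"
   and V: "openin X V" and f: "f \<in> G" "\<not> V \<subseteq> dm f"
  shows "\<exists>N. openin T N \<and> f \<in> N \<and> T closure_of N \<subseteq> {h\<in>G. \<not> V \<subseteq> dm h}"
proof -
  obtain x where x: "x \<in> V" "x \<notin> dm f" using f by blast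
  have xt: "x \<in> topspace X" using x V openin_subset by blast
  obtain U where U: "openin X U" "{x} \<subseteq> U" "compactin X (X closure_of U)" "X closure_of U \<subseteq> V"
    using lc_nbhd[OF lc H _ V] xt x by (metis compactin_sing empty_subsetI insert_subset)
  have Ut: "U \<subseteq> topspace X" using U(1) openin_subset by blast
  have UcU: "U \<subseteq> X closure_of U" using closure_of_subset Ut by blast
  define N where "N = {h\<in>G. \<not> U \<subseteq> dm h}"
  have oN: "openin T N" unfolding N_def using H3 U(1) by blast
  have fN: "f \<in> N" unfolding N_def using f(1) x U(2) by blast
  have "T closure_of N \<subseteq> {h\<in>G. \<not> V \<subseteq> dm h}"
  proof (rule closure_sub_crit[OF TG])
    fix g assume g: "g \<in> G" "g \<notin> {h\<in>G. \<not> V \<subseteq> dm h}"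
    then have gV: "V \<subseteq> dm g" by blast
    have cg: "continuous_map (subtopology X (dm g)) X (ap g)" using H1 g(1) by blast
    define M where "M = {h\<in>G. X closure_of U \<subseteq> dm h \<and> ap h ` (X closure_of U) \<subseteq> topspace X}"
    have "openin T M" unfolding M_def using H2 U(3) by blast
    moreover have "g \<in> M" unfolding M_def using g(1) gV U(4) cg closure_of_subset_topspace[of X U]
      by (auto simp: continuous_map_def)
    moreover have "M \<inter> N = {}" unfolding M_def N_def using UcU by blast
    ultimately show "\<exists>M. openin T M \<and> g \<in> M \<and> M \<inter> N = {}" by blast
  qed
  then show ?thesis using oN fN by blast
qed


definition goodset :: "'b topology \<Rightarrow> 'b set \<Rightarrow> bool" where
  "goodset T S \<longleftrightarrow> (\<forall>f\<in>S. \<exists>N. openin T N \<and> f \<in> N \<and> T closure_of N \<subseteq> S)"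

lemma good_empty: "goodset T {}" by (simp add: goodset_def)

lemma good_Int: assumes "goodset T A" "goodset T B" shows "goodset T (A \<inter> B)"
  unfolding goodset_def
proof
  fix f assume f: "f \<in> A \<inter> B"
  have a1: "\<forall>f\<in>A. \<exists>N. openin T N \<and> f \<in> N \<and> T closure_of N \<subseteq> A"
    using assms(1) unfolding goodset_def .
  have a2: "\<forall>f\<in>B. \<exists>N. openin T N \<and> f \<in> N \<and> T closure_of N \<subseteq> B"
    using assms(2) unfolding goodset_def .
  obtain N1 where N1: "openin T N1" "f \<in> N1" "T closure_of N1 \<subseteq> A" using a1 f by blast
  obtain N2 where N2: "openin T N2" "f \<in> N2" "T closure_of N2 \<subseteq> B" using a2 f by blast
  have "T closure_of (N1 \<inter> N2) \<subseteq> T closure_of N1" "T closure_of (N1 \<inter> N2) \<subseteq> T closure_of N2"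
    by (simp_all add: closure_of_mono)
  then have "T closure_of (N1 \<inter> N2) \<subseteq> A \<inter> B"
    using N1(3) N2(3) by blast
  moreover have "openin T (N1 \<inter> N2)" using N1(1) N2(1) by (rule openin_Int)
  ultimately show "\<exists>N. openin T N \<and> f \<in> N \<and> T closure_of N \<subseteq> A \<inter> B"
    using N1(2) N2(2) by blast
qed

lemma good_Union: assumes "\<And>A. A \<in> F \<Longrightarrow> goodset T A" shows "goodset T (\<Union>F)"
  unfolding goodset_def
proof
  fix f assume "f \<in> \<Union>F"
  then obtain A where A: "A \<in> F" "f \<in> A" by blast
  have "\<forall>f\<in>A. \<exists>N. openin T N \<and> f \<in> N \<and> T closure_of N \<subseteq> A"
    using assms[OF A(1)] unfolding goodset_def .
  then obtain N where "openin T N" "f \<in> N" "T closure_of N \<subseteq> A" using A(2) by blast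
  then show "\<exists>N. openin T N \<and> f \<in> N \<and> T closure_of N \<subseteq> \<Union>F" using A by blast
qed

lemma genericD:
  fixes X :: "'a topology" and T :: "'b topology"
  assumes lc: "locally_compact_space X" and H: "Hausdorff_space X"
   and H1: "\<And>h. h \<in> G \<Longrightarrow> openin X (dm h) \<and> continuous_map (subtopology X (dm h)) X (ap h)"
   and H2: "\<And>K V. compactin X K \<Longrightarrow> openin X V \<Longrightarrow> openin T {h\<in>G. K \<subseteq> dm h \<and> ap h ` K \<subseteq> V}"
   and H3: "\<And>U. openin X U \<Longrightarrow> openin T {h\<in>G. \<not> U \<subseteq> dm h}"
   and TG: "topspace T \<subseteq> G"
   and W: "openin (fell_topology X) W"
  shows "goodset T {f\<in>G. topspace X - dm f \<in> W}"
proof -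
  have "generate_topology_on ({{A \<in> CLs X. A \<subseteq> topspace X - K} | K. compactin X K} \<union>
      {{A \<in> CLs X. A \<inter> V \<noteq> {}} | V. openin X V \<and> V \<noteq> {}}) W"
    using W unfolding fell_topology_def openin_topology_generated_by_iff .
  then show ?thesis
  proof (induction rule: generate_topology_on.induct)
    case Empty
    then show ?case by (simp add: good_empty)
  next
    case (Int a b)
    have eq: "{f\<in>G. topspace X - dm f \<in> a \<inter> b} = {f\<in>G. topspace X - dm f \<in> a} \<inter> {f\<in>G. topspace X - dm f \<in> b}"
      by blast
    show ?case by (subst eq) (rule good_Int[OF Int.IH])
  next
    case (UN K)
    have eq: "{f\<in>G. topspace X - dm f \<in> \<Union>K} = \<Union>((\<lambda>k. {f\<in>G. topspace X - dm f \<in> k}) ` K)"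
      by blast
    show ?case
    proof (subst eq, rule good_Union)
      fix A assume "A \<in> (\<lambda>k. {f\<in>G. topspace X - dm f \<in> k}) ` K"
      then obtain k where "k \<in> K" "A = {f\<in>G. topspace X - dm f \<in> k}" by blast
      then show "goodset T A" using UN.IH by simp
    qed
  next
    case (Basis s)
    have cl: "\<And>f. f \<in> G \<Longrightarrow> topspace X - dm f \<in> CLs X"
      using H1 by (simp add: CLs_def closedin_diff)
    show ?case
    proof (cases "s \<in> {{A \<in> CLs X. A \<subseteq> topspace X - K} | K. compactin X K}")
      case True
      then obtain K where K: "compactin X K" "s = {A \<in> CLs X. A \<subseteq> topspace X - K}" by blast
      have Kt: "K \<subseteq> topspace X" using K compactin_subset_topspace by blast
      have eq: "{f\<in>G. topspace X - dm f \<in> s} = {h\<in>G. K \<subseteq> dm h \<and> ap h ` K \<subseteq> topspace X}"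
      proof (intro set_eqI iffI)
        fix f assume "f \<in> {f\<in>G. topspace X - dm f \<in> s}"
        then have f: "f \<in> G" "K \<subseteq> dm f" using K(2) Kt by auto
        then have "ap f ` K \<subseteq> topspace X" using H1[OF f(1)] Kt by (auto simp: continuous_map_def)
        then show "f \<in> {h\<in>G. K \<subseteq> dm h \<and> ap h ` K \<subseteq> topspace X}" using f by blast
      next
        fix f assume "f \<in> {h\<in>G. K \<subseteq> dm h \<and> ap h ` K \<subseteq> topspace X}"
        then show "f \<in> {f\<in>G. topspace X - dm f \<in> s}" using K(2) cl by auto
      qed
      show ?thesis unfolding eq goodset_def
      proof (rule ballI)
        fix f assume "f \<in> {h\<in>G. K \<subseteq> dm h \<and> ap h ` K \<subseteq> topspace X}"
        then have "f \<in> G" "K \<subseteq> dm f" "ap f ` K \<subseteq> topspace X" by auto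
        from generic1[OF lc H H1 H2 H3 TG K(1) openin_topspace this]
        show "\<exists>N. openin T N \<and> f \<in> N \<and> T closure_of N \<subseteq> {h\<in>G. K \<subseteq> dm h \<and> ap h ` K \<subseteq> topspace X}" .
      qed
    next
      case False
      then obtain V where V: "openin X V" "V \<noteq> {}" "s = {A \<in> CLs X. A \<inter> V \<noteq> {}}" using Basis by blast
      have Vt: "V \<subseteq> topspace X" using V openin_subset by blast
      have eq: "{f\<in>G. topspace X - dm f \<in> s} = {h\<in>G. \<not> V \<subseteq> dm h}"
        using V(3) Vt cl by auto
      show ?thesis unfolding eq goodset_def
      proof (rule ballI)
        fix f assume "f \<in> {h\<in>G. \<not> V \<subseteq> dm h}"
        then have "f \<in> G" "\<not> V \<subseteq> dm f" by auto
        from generic2[OF lc H H1 H2 H3 TG V(1) this]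
        show "\<exists>N. openin T N \<and> f \<in> N \<and> T closure_of N \<subseteq> {h\<in>G. \<not> V \<subseteq> dm h}" .
      qed
    qed
  qed
qed


lemma sb1: "compactin X K \<Longrightarrow> openin X V \<Longrightarrow>
  {f \<in> Gamma X. K \<subseteq> dom f \<and> pimg f K \<subseteq> V} \<in> hco_subbasis X"
  unfolding hco_subbasis_def
  apply (rule UnI1, rule UnI1, rule UnI1, rule CollectI)
  apply (rule exI[of _ K], rule exI[of _ V])
  by simp

lemma sb2: "compactin X K \<Longrightarrow> openin X V \<Longrightarrow>
  {f \<in> Gamma X. K \<subseteq> ran f \<and> ppre f K \<subseteq> V} \<in> hco_subbasis X"
  unfolding hco_subbasis_def
  apply (rule UnI1, rule UnI1, rule UnI2, rule CollectI)
  apply (rule exI[of _ K], rule exI[of _ V])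
  by simp

lemma sb3: "openin (fell_topology X) W \<Longrightarrow>
  {f \<in> Gamma X. Dom_c X f \<in> W} \<in> hco_subbasis X"
  unfolding hco_subbasis_def
  apply (rule UnI1, rule UnI2, rule CollectI)
  apply (rule exI[of _ W])
  by simp

lemma sb4: "openin (fell_topology X) W \<Longrightarrow>
  {f \<in> Gamma X. Im_c X f \<in> W} \<in> hco_subbasis X"
  unfolding hco_subbasis_def
  apply (rule UnI2, rule CollectI)
  apply (rule exI[of _ W])
  by simp

lemma dom_H2: "compactin X K \<Longrightarrow> openin X V \<Longrightarrow>
  openin (hco_topology X) {h\<in>Gamma X. K \<subseteq> dom h \<and> (\<lambda>x. the (h x)) ` K \<subseteq> V}"
  using hco_open_basis[OF sb1] unfolding pimg_def .

lemma ran_H2: "compactin X K \<Longrightarrow> openin X V \<Longrightarrow>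
  openin (hco_topology X) {h\<in>Gamma X. K \<subseteq> ran h \<and> finv h ` K \<subseteq> V}"
proof -
  assume a: "compactin X K" "openin X V"
  have "{h\<in>Gamma X. K \<subseteq> ran h \<and> finv h ` K \<subseteq> V} = {h\<in>Gamma X. K \<subseteq> ran h \<and> ppre h K \<subseteq> V}"
  proof (rule Collect_cong)
    fix h show "(h \<in> Gamma X \<and> K \<subseteq> ran h \<and> finv h ` K \<subseteq> V) = (h \<in> Gamma X \<and> K \<subseteq> ran h \<and> ppre h K \<subseteq> V)"
      using Gamma_ran(3)[of h X K] by auto
  qed
  then show ?thesis using hco_open_basis[OF sb2[OF a]] by simp
qed

lemma dom_H3: assumes U: "openin X U"
  shows "openin (hco_topology X) {h\<in>Gamma X. \<not> U \<subseteq> dom h}"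
proof (cases "U = {}")
  case True then show ?thesis by simp
next
  case False
  have Ut: "U \<subseteq> topspace X" using U openin_subset by blast
  have "{h\<in>Gamma X. \<not> U \<subseteq> dom h} = {h\<in>Gamma X. Dom_c X h \<in> {A \<in> CLs X. A \<inter> U \<noteq> {}}}"
  proof (rule Collect_cong)
    fix h show "(h \<in> Gamma X \<and> \<not> U \<subseteq> dom h) = (h \<in> Gamma X \<and> Dom_c X h \<in> {A \<in> CLs X. A \<inter> U \<noteq> {}})"
      using Ut Gamma_dom(1)[of h X] by (auto simp: Dom_c_def CLs_def closedin_diff)
  qed
  then show ?thesis using hco_open_basis[OF sb3[OF fell_open2[OF U False]]] by simp
qed

lemma ran_H3: assumes U: "openin X U"
  shows "openin (hco_topology X) {h\<in>Gamma X. \<not> U \<subseteq> ran h}"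
proof (cases "U = {}")
  case True then show ?thesis by simp
next
  case False
  have Ut: "U \<subseteq> topspace X" using U openin_subset by blast
  have "{h\<in>Gamma X. \<not> U \<subseteq> ran h} = {h\<in>Gamma X. Im_c X h \<in> {A \<in> CLs X. A \<inter> U \<noteq> {}}}"
  proof (rule Collect_cong)
    fix h show "(h \<in> Gamma X \<and> \<not> U \<subseteq> ran h) = (h \<in> Gamma X \<and> Im_c X h \<in> {A \<in> CLs X. A \<inter> U \<noteq> {}})"
      using Ut Gamma_ran(1)[of h X] by (auto simp: Im_c_def CLs_def closedin_diff)
  qed
  then show ?thesis using hco_open_basis[OF sb4[OF fell_open2[OF U False]]] by simp
qed

context
  fixes X :: "'a topology"
  assumes lc: "locally_compact_space X" and H: "Hausdorff_space X"
begin

lemma H1d: "\<And>h. h \<in> Gamma X \<Longrightarrow> openin X (dom h) \<and> continuous_map (subtopology X (dom h)) X ((\<lambda>h x. the (h x)) h)"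
  using Gamma_dom by auto
lemma H2d: "\<And>K V. compactin X K \<Longrightarrow> openin X V \<Longrightarrow> openin (hco_topology X) {h\<in>Gamma X. K \<subseteq> dom h \<and> (\<lambda>h x. the (h x)) h ` K \<subseteq> V}"
  using dom_H2 by auto
lemma H3d: "\<And>U. openin X U \<Longrightarrow> openin (hco_topology X) {h\<in>Gamma X. \<not> U \<subseteq> dom h}"
  using dom_H3 by auto
lemma H1r: "\<And>h. h \<in> Gamma X \<Longrightarrow> openin X (ran h) \<and> continuous_map (subtopology X (ran h)) X (finv h)"
  using Gamma_ran by auto
lemma H2r: "\<And>K V. compactin X K \<Longrightarrow> openin X V \<Longrightarrow> openin (hco_topology X) {h\<in>Gamma X. K \<subseteq> ran h \<and> finv h ` K \<subseteq> V}"
  using ran_H2 by auto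
lemma H3r: "\<And>U. openin X U \<Longrightarrow> openin (hco_topology X) {h\<in>Gamma X. \<not> U \<subseteq> ran h}"
  using ran_H3 by auto

lemma goodA: assumes K: "compactin X K" and V: "openin X V"
  shows "goodset (hco_topology X) {f \<in> Gamma X. K \<subseteq> dom f \<and> pimg f K \<subseteq> V}"
  unfolding goodset_def pimg_def
proof (rule ballI)
  fix f assume "f \<in> {f \<in> Gamma X. K \<subseteq> dom f \<and> (\<lambda>x. the (f x)) ` K \<subseteq> V}"
  then have "f \<in> Gamma X" "K \<subseteq> dom f" "(\<lambda>h x. the (h x)) f ` K \<subseteq> V" by auto
  note ff = this
  show "\<exists>N. openin (hco_topology X) N \<and> f \<in> N \<and> hco_topology X closure_of N \<subseteq> {f \<in> Gamma X. K \<subseteq> dom f \<and> (\<lambda>x. the (f x)) ` K \<subseteq> V}"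
    by (rule generic1[OF lc H]) (assumption | rule H1d H2d H3d hco_topspace_sub K V ff)+
qed

lemma goodB: assumes K: "compactin X K" and V: "openin X V"
  shows "goodset (hco_topology X) {f \<in> Gamma X. K \<subseteq> ran f \<and> ppre f K \<subseteq> V}"
proof -
  have eq: "{f \<in> Gamma X. K \<subseteq> ran f \<and> ppre f K \<subseteq> V} = {f \<in> Gamma X. K \<subseteq> ran f \<and> finv f ` K \<subseteq> V}"
  proof (rule Collect_cong)
    fix h show "(h \<in> Gamma X \<and> K \<subseteq> ran h \<and> ppre h K \<subseteq> V) = (h \<in> Gamma X \<and> K \<subseteq> ran h \<and> finv h ` K \<subseteq> V)"
      using Gamma_ran(3)[of h X K] by auto
  qed
  show ?thesis unfolding eq goodset_def
  proof (rule ballI)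
    fix f assume "f \<in> {f \<in> Gamma X. K \<subseteq> ran f \<and> finv f ` K \<subseteq> V}"
    then have "f \<in> Gamma X" "K \<subseteq> ran f" "finv f ` K \<subseteq> V" by auto
    note ff = this
    show "\<exists>N. openin (hco_topology X) N \<and> f \<in> N \<and> hco_topology X closure_of N \<subseteq> {f \<in> Gamma X. K \<subseteq> ran f \<and> finv f ` K \<subseteq> V}"
      by (rule generic1[OF lc H]) (assumption | rule H1r H2r H3r hco_topspace_sub K V ff)+
  qed
qed

lemma goodC: assumes W: "openin (fell_topology X) W"
  shows "goodset (hco_topology X) {f \<in> Gamma X. Dom_c X f \<in> W}"
  unfolding Dom_c_def by (rule genericD[OF lc H]) (assumption | rule H1d H2d H3d hco_topspace_sub W)+

lemma goodD: assumes W: "openin (fell_topology X) W"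
  shows "goodset (hco_topology X) {f \<in> Gamma X. Im_c X f \<in> W}"
  unfolding Im_c_def by (rule genericD[OF lc H]) (assumption | rule H1r H2r H3r hco_topspace_sub W)+

lemma subbasis_good:
  assumes s: "s \<in> hco_subbasis X"
  shows "goodset (hco_topology X) s"
  using s unfolding hco_subbasis_def
  apply (elim UnE CollectE exE conjE)
  by (simp_all add: goodA goodB goodC goodD)

end

theorem mainTheorem2:
  fixes X :: "'a topology"
  assumes "locally_compact_space X" and "Hausdorff_space X"
  shows "regular_space (hco_topology X)"
proof -
  have good: "goodset (hco_topology X) O'" if "openin (hco_topology X) O'" for O'
  proof -
    have "generate_topology_on (hco_subbasis X) O'"
      using that unfolding hco_topology_def openin_topology_generated_by_iff .
    then show ?thesis
    proof (induction rule: generate_topology_on.induct)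
      case Empty then show ?case by (rule good_empty)
    next
      case (Int a b) then show ?case by (simp add: good_Int)
    next
      case (UN K) show ?case by (rule good_Union) (rule UN.IH)
    next
      case (Basis s) then show ?case by (rule subbasis_good[OF assms])
    qed
  qed
  have R: "\<exists>U V. openin (hco_topology X) U \<and> closedin (hco_topology X) V \<and> x \<in> U \<and> U \<subseteq> V \<and> V \<subseteq> W"
    if hW: "openin (hco_topology X) W" and hx: "x \<in> W" for W x
  proof -
    have "\<forall>f\<in>W. \<exists>N. openin (hco_topology X) N \<and> f \<in> N \<and> hco_topology X closure_of N \<subseteq> W"
      using good[OF hW] unfolding goodset_def .
    then obtain N where N: "openin (hco_topology X) N" "x \<in> N" "hco_topology X closure_of N \<subseteq> W"
      using hx by blast
    have "N \<subseteq> hco_topology X closure_of N"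
      using closure_of_subset[OF openin_subset[OF N(1)]] .
    then show ?thesis using N closedin_closure_of by blast
  qed
  have "neighbourhood_base_of (closedin (hco_topology X)) (hco_topology X)"
    unfolding neighbourhood_base_of
  proof (intro allI impI)
    fix W x assume "openin (hco_topology X) W \<and> x \<in> W"
    then show "\<exists>U V. openin (hco_topology X) U \<and> closedin (hco_topology X) V \<and> x \<in> U \<and> U \<subseteq> V \<and> V \<subseteq> W"
      using R by blast
  qed
  then show ?thesis using neighbourhood_base_of_closedin by blast
qed

end
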